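(* Let $\Delta>0$, $\sigma_m>0$ and $\rho_m\in(-1,1)$. Let $(x_m,w_m)$ be a pair of real random variables with joint probability density $$f(x_m,w_m)=\frac{1}{2\pi\sigma_m^2\sqrt{1-\rho_m^2}}\exp\!\left(-\frac{x_m^2+w_m^2-2\rho_m x_m w_m}{2\sigma_m^2(1-\rho_m^2)}\right),$$ and define $$k_m=\frac{|x_m-w_m|}{\Delta^2\left(1+\frac{(x_m+w_m)^2}{4\Delta^2}\right)^{3/2}}.$$ Then $$E\{k_m\}=\int_{-\infty}^{\infty}\int_{-\infty}^{\infty} k_m\, f(x_m,w_m)\,\mathrm{d}x_m\,\mathrm{d}w_m=\frac{4}{\pi\Delta}\sqrt{\frac{1-\rho_m}{1+\rho_m}}\int_0^{\infty}\frac{1}{(1+\eta^2)^{3/2}}\exp\!\left(-\frac{\Delta^2}{\sigma_m^2(1+\rho_m)}\eta^2\right)\mathrm{d}\eta .$$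
   Context: Setting: a signal $(y_1,\dots,y_N)$ sampled at equally spaced points with spacing $\Delta$; for $m=2,\dots,N-1$, $x_m=y_{m+1}-y_m$ and $w_m=y_m-y_{m-1}$ are modeled as jointly Gaussian, zero mean, each with variance $\sigma_m^2$ and correlation coefficient $\rho_m=\mathrm{Cov}\{x_m,w_m\}/\sigma_m^2$. The quantity $k_m$ is the finite-difference approximation at the $m$-th sample of the curvature $|y''|/(1+y'^2)^{3/2}$ of the signal. *)

theory Defs
  imports "HOL-Probability.Probability"
begin

definition biv_normal_density :: "real \<Rightarrow> real \<Rightarrow> real \<times> real \<Rightarrow> real" where
  "biv_normal_density \<sigma> \<rho> = (\<lambda>(x, w).
     1 / (2 * pi * \<sigma>\<^sup>2 * sqrt (1 - \<rho>\<^sup>2)) *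
     exp (- (x\<^sup>2 + w\<^sup>2 - 2 * \<rho> * x * w) / (2 * \<sigma>\<^sup>2 * (1 - \<rho>\<^sup>2))))"

definition curvature_fd :: "real \<Rightarrow> real \<times> real \<Rightarrow> real" where
  "curvature_fd \<Delta> = (\<lambda>(x, w).
     \<bar>x - w\<bar> / (\<Delta>\<^sup>2 * (1 + (x + w)\<^sup>2 / (4 * \<Delta>\<^sup>2)) powr (3/2)))"

end

theory Submission
  imports Defs "HOL-Real_Asymp.Real_Asymp"
begin



lemma pair_change:
  fixes F :: "real \<times> real \<Rightarrow> ennreal"
  assumes [measurable]: "F \<in> borel_measurable borel"
  shows "(\<integral>\<^sup>+p. F p \<partial>lborel) = ennreal (1/2) * (\<integral>\<^sup>+u. \<integral>\<^sup>+v. F ((v+u)/2, (v-u)/2) \<partial>lborel \<partial>lborel)"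
proof -
  have P: "pair_sigma_finite lborel lborel" by unfold_locales
  have "(\<integral>\<^sup>+p. F p \<partial>lborel) = (\<integral>\<^sup>+p. F p \<partial>(lborel \<Otimes>\<^sub>M lborel))"
    by (simp add: lborel_prod)
  also have "\<dots> = (\<integral>\<^sup>+w. \<integral>\<^sup>+x. F (x, w) \<partial>lborel \<partial>lborel)"
    by (rule pair_sigma_finite.nn_integral_snd[OF P, symmetric]) (simp add: lborel_prod)
  also have "\<dots> = (\<integral>\<^sup>+w. \<integral>\<^sup>+u. F (w + u, w) \<partial>lborel \<partial>lborel)"
  proof (rule nn_integral_cong)
    fix w :: real
    show "(\<integral>\<^sup>+x. F (x, w) \<partial>lborel) = (\<integral>\<^sup>+u. F (w + u, w) \<partial>lborel)"
      using nn_integral_real_affine[where c=1 and t=w and f="\<lambda>x. F (x, w)"] by simp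
  qed
  also have "\<dots> = (\<integral>\<^sup>+u. \<integral>\<^sup>+w. F (w + u, w) \<partial>lborel \<partial>lborel)"
    using pair_sigma_finite.Fubini[OF P, of "\<lambda>(u,w). F (w + u, w)"] by simp
  also have "\<dots> = (\<integral>\<^sup>+u. ennreal (1/2) * \<integral>\<^sup>+v. F ((v+u)/2, (v-u)/2) \<partial>lborel \<partial>lborel)"
  proof (rule nn_integral_cong)
    fix u :: real
    have "(\<integral>\<^sup>+w. F (w + u, w) \<partial>lborel) = ennreal (abs (1/2)) * (\<integral>\<^sup>+v. F ((- u / 2 + (1/2) * v) + u, - u / 2 + (1/2) * v) \<partial>lborel)"
      using nn_integral_real_affine[where c="1/2" and t="- u / 2" and f="\<lambda>w. F (w + u, w)"] by simp
    also have "\<dots> = ennreal (1/2) * (\<integral>\<^sup>+v. F ((v+u)/2, (v-u)/2) \<partial>lborel)"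
      by (auto intro!: arg_cong2[where f="(*)"] nn_integral_cong simp: field_simps)
    finally show "(\<integral>\<^sup>+w. F (w + u, w) \<partial>lborel) = ennreal (1/2) * \<integral>\<^sup>+v. F ((v+u)/2, (v-u)/2) \<partial>lborel" .
  qed
  also have "\<dots> = ennreal (1/2) * (\<integral>\<^sup>+u. \<integral>\<^sup>+v. F ((v+u)/2, (v-u)/2) \<partial>lborel \<partial>lborel)"
    by (rule nn_integral_cmult) simp
  finally show ?thesis .
qed

lemma even_nn:
  fixes g :: "real \<Rightarrow> real"
  assumes [measurable]: "g \<in> borel_measurable borel" and ev: "\<And>x. g (-x) = g x"
  shows "(\<integral>\<^sup>+x. ennreal (g x) \<partial>lborel) = 2 * (\<integral>\<^sup>+x. ennreal (g x) * indicator {0..} x \<partial>lborel)"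
proof -
  have "(\<integral>\<^sup>+x. ennreal (g x) \<partial>lborel) = (\<integral>\<^sup>+x. ennreal (g x) * indicator {0..} x + ennreal (g x) * indicator {..0} x \<partial>lborel)"
    by (intro nn_integral_cong_AE, use AE_lborel_singleton[of 0] in eventually_elim) (auto simp: indicator_def)
  also have "\<dots> = (\<integral>\<^sup>+x. ennreal (g x) * indicator {0..} x \<partial>lborel) + (\<integral>\<^sup>+x. ennreal (g x) * indicator {..0} x \<partial>lborel)"
    by (rule nn_integral_add) auto
  also have "(\<integral>\<^sup>+x. ennreal (g x) * indicator {..0} x \<partial>lborel) = (\<integral>\<^sup>+x. ennreal (g x) * indicator {0..} x \<partial>lborel)"
    by (subst nn_integral_real_affine[where c="-1" and t=0]) (auto simp: ev indicator_def intro!: nn_integral_cong)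
  finally show ?thesis by (simp add: mult_2)
qed


lemma gauss_half:
  fixes a :: real assumes a: "a > 0"
  shows "(\<integral>\<^sup>+u. ennreal (u * exp (- u\<^sup>2 / a)) * indicator {0..} u \<partial>lborel) = ennreal (a/2)"
proof -
  have "(\<integral>\<^sup>+u. ennreal (u * exp (- u\<^sup>2 / a)) * indicator {0..} u \<partial>lborel) = ennreal (0 - (- (a/2) * exp (- 0\<^sup>2 / a)))"
  proof (rule nn_integral_FTC_atLeast)
    show "(\<lambda>u. u * exp (- u\<^sup>2 / a)) \<in> borel_measurable borel" by measurable
    show "DERIV (\<lambda>u. - (a/2) * exp (- u\<^sup>2 / a)) x :> x * exp (- x\<^sup>2 / a)" for x
      using a by (auto intro!: derivative_eq_intros simp: field_simps power2_eq_square)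
    show "0 \<le> x \<Longrightarrow> 0 \<le> x * exp (- x\<^sup>2 / a)" for x by simp
    show "((\<lambda>u. - (a/2) * exp (- u\<^sup>2 / a)) \<longlongrightarrow> 0) at_top"
      using a by real_asymp
  qed
  then show ?thesis by simp
qed

lemma arctan_half:
  shows "(\<integral>\<^sup>+u. ennreal (1 / (1 + u\<^sup>2)) * indicator {0..} u \<partial>lborel) = ennreal (pi/2)"
proof -
  have "(\<integral>\<^sup>+u. ennreal (1 / (1 + u\<^sup>2)) * indicator {0..} u \<partial>lborel) = ennreal (pi/2 - arctan 0)"
  proof (rule nn_integral_FTC_atLeast)
    show "(\<lambda>u::real. 1 / (1 + u\<^sup>2)) \<in> borel_measurable borel" by measurable
    show "DERIV arctan x :> 1 / (1 + x\<^sup>2)" for x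
      using DERIV_arctan[of x] by (simp add: divide_inverse)
    show "0 \<le> x \<Longrightarrow> 0 \<le> 1 / (1 + x\<^sup>2)" for x::real by (simp add: add_pos_nonneg)
    show "(arctan \<longlongrightarrow> pi/2) at_top" by (rule tendsto_arctan_at_top)
  qed
  then show ?thesis by simp
qed

lemma meas_h: "(\<lambda>p. curvature_fd \<Delta> p * biv_normal_density \<sigma> \<rho> p) \<in> borel_measurable borel"
  unfolding curvature_fd_def biv_normal_density_def split_beta borel_prod[symmetric] by measurable


lemma aux: fixes U V p q s :: real assumes "p \<noteq> 0" "q \<noteq> 0" "s \<noteq> 0"
  shows "- (U * q + V * p) / 2 / (2 * s * (p * q)) = - U / (4 * s * p) + - V / (4 * s * q)"
  using assms by (simp add: field_simps)

lemma aux2: fixes T s D S m :: real assumes "T > 0" "s > 0" "D > 0" "S * T = m"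
  shows "1/2 * (1 / (2 * pi * s\<^sup>2 * T)) * (4 * s\<^sup>2 * m) * (4 / D) = 4 / (pi * D) * S"
  using assms(1-3) unfolding assms(4)[symmetric] by (simp add: field_simps)

theorem proposition1:
  fixes \<Delta> \<sigma> \<rho> :: real
  assumes "\<Delta> > 0" and "\<sigma> > 0" and "-1 < \<rho>" and "\<rho> < 1"
  shows "integrable lborel (\<lambda>p. curvature_fd \<Delta> p * biv_normal_density \<sigma> \<rho> p)
    \<and> (\<integral>p. curvature_fd \<Delta> p * biv_normal_density \<sigma> \<rho> p \<partial>lborel)
      = 4 / (pi * \<Delta>) * sqrt ((1 - \<rho>) / (1 + \<rho>)) *
        (\<integral>\<eta>\<in>{0..}. 1 / (1 + \<eta>\<^sup>2) powr (3/2) *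
            exp (- (\<Delta>\<^sup>2 / (\<sigma>\<^sup>2 * (1 + \<rho>))) * \<eta>\<^sup>2) \<partial>lborel)"
proof -
  note D = assms(1) and s = assms(2) and r1 = assms(3) and r2 = assms(4)
  define h where "h = (\<lambda>p. curvature_fd \<Delta> p * biv_normal_density \<sigma> \<rho> p)"
  define C where "C = 1 / (2 * pi * \<sigma>\<^sup>2 * sqrt (1 - \<rho>\<^sup>2))"
  define a where "a = 4 * \<sigma>\<^sup>2 * (1 - \<rho>)"
  define b where "b = 4 * \<sigma>\<^sup>2 * (1 + \<rho>)"
  define A where "A = (\<lambda>u::real. \<bar>u\<bar> * exp (- u\<^sup>2 / a))"
  define B where "B = (\<lambda>v::real. 1 / (\<Delta>\<^sup>2 * (1 + v\<^sup>2 / (4 * \<Delta>\<^sup>2)) powr (3/2)) * exp (- v\<^sup>2 / b))"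
  define G where "G = (\<lambda>\<eta>::real. 1 / (1 + \<eta>\<^sup>2) powr (3/2) * exp (- (\<Delta>\<^sup>2 / (\<sigma>\<^sup>2 * (1 + \<rho>))) * \<eta>\<^sup>2))"
  define J where "J = (\<integral>\<^sup>+\<eta>. ennreal (G \<eta>) * indicator {0..} \<eta> \<partial>lborel)"
  define K where "K = 4 / (pi * \<Delta>) * sqrt ((1 - \<rho>) / (1 + \<rho>))"
  have a0: "a > 0" and b0: "b > 0" using s r1 r2 by (auto simp: a_def b_def)
  have rr: "1 - \<rho>\<^sup>2 > 0" using r1 r2 by (simp add: abs_square_less_1)
  have C0: "C > 0" using rr s by (simp add: C_def)
  have hm: "h \<in> borel_measurable borel" unfolding h_def by (rule meas_h)
  have h0: "\<And>p. 0 \<le> h p"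
    using rr s D by (auto simp: h_def curvature_fd_def biv_normal_density_def intro!: mult_nonneg_nonneg divide_nonneg_nonneg)
  have A0: "\<And>u. 0 \<le> A u" by (simp add: A_def)
  have B0: "\<And>v. 0 \<le> B v" by (simp add: B_def)
  have G0: "\<And>v. 0 \<le> G v" by (simp add: G_def)
  have Am: "A \<in> borel_measurable borel" unfolding A_def by measurable
  have Bm: "B \<in> borel_measurable borel" unfolding B_def by measurable
  have Gm: "G \<in> borel_measurable borel" unfolding G_def by measurable
  have pw: "h ((v+u)/2, (v-u)/2) = C * A u * B v" for u v
  proof -
    have e: "- (((v+u)/2)\<^sup>2 + ((v-u)/2)\<^sup>2 - 2 * \<rho> * ((v+u)/2) * ((v-u)/2)) / (2 * \<sigma>\<^sup>2 * (1 - \<rho>\<^sup>2))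
        = - u\<^sup>2 / a + - v\<^sup>2 / b"
    proof -
      have p1: "1 + \<rho> > 0" "1 - \<rho> > 0" using r1 r2 by auto
      have dD: "1 - \<rho>\<^sup>2 = (1 - \<rho>) * (1 + \<rho>)" by (simp add: power2_eq_square algebra_simps)
      have nN: "((v+u)/2)\<^sup>2 + ((v-u)/2)\<^sup>2 - 2 * \<rho> * ((v+u)/2) * ((v-u)/2) = (u\<^sup>2 * (1 + \<rho>) + v\<^sup>2 * (1 - \<rho>)) / 2"
        by (simp add: power2_eq_square field_simps)
      have n: "1 + \<rho> \<noteq> 0" "1 - \<rho> \<noteq> 0" "\<sigma> \<noteq> 0" using p1 s by auto
      have "- (u\<^sup>2 * (1 + \<rho>) + v\<^sup>2 * (1 - \<rho>)) / 2 / (2 * \<sigma>\<^sup>2 * ((1 - \<rho>) * (1 + \<rho>))) = - u\<^sup>2 / a + - v\<^sup>2 / b"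
        unfolding a_def b_def using aux[of "1 - \<rho>" "1 + \<rho>" "\<sigma>\<^sup>2" "u\<^sup>2" "v\<^sup>2"] n by (simp add: mult.assoc)
      then show ?thesis by (simp only: nN dD minus_divide_left)
    qed
    have x1: "(v+u)/2 - (v-u)/2 = u" by (simp add: field_simps)
    have x2: "(v+u)/2 + (v-u)/2 = v" by (simp add: field_simps)
    show ?thesis
      unfolding h_def curvature_fd_def biv_normal_density_def split_beta fst_conv snd_conv x1 x2 e exp_add
      by (simp add: A_def B_def C_def mult_ac)
  qed
  have hE: "(\<integral>\<^sup>+p. ennreal (h p) \<partial>lborel) = ennreal (1/2) * (\<integral>\<^sup>+u. \<integral>\<^sup>+v. ennreal (h ((v+u)/2, (v-u)/2)) \<partial>lborel \<partial>lborel)"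
    by (rule pair_change) (use hm in measurable)
  define IA where "IA = (\<integral>\<^sup>+u. ennreal (A u) \<partial>lborel)"
  define IB where "IB = (\<integral>\<^sup>+v. ennreal (B v) \<partial>lborel)"
  have inner: "(\<integral>\<^sup>+v. ennreal (h ((v+u)/2, (v-u)/2)) \<partial>lborel) = ennreal (C * A u) * IB" for u
  proof -
    have "(\<integral>\<^sup>+v. ennreal (h ((v+u)/2, (v-u)/2)) \<partial>lborel) = (\<integral>\<^sup>+v. ennreal (C * A u) * ennreal (B v) \<partial>lborel)"
      using C0 A0 B0 by (intro nn_integral_cong) (simp add: pw ennreal_mult)
    also have "\<dots> = ennreal (C * A u) * IB" unfolding IB_def
      by (rule nn_integral_cmult) (use Bm in measurable)
    finally show ?thesis .
  qed
  have outer: "(\<integral>\<^sup>+u. ennreal (C * A u) * IB \<partial>lborel) = ennreal C * IA * IB"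
  proof -
    have "(\<integral>\<^sup>+u. ennreal (C * A u) * IB \<partial>lborel) = (\<integral>\<^sup>+u. ennreal (C * A u) \<partial>lborel) * IB"
      by (rule nn_integral_multc) (use Am in measurable)
    also have "(\<integral>\<^sup>+u. ennreal (C * A u) \<partial>lborel) = (\<integral>\<^sup>+u. ennreal C * ennreal (A u) \<partial>lborel)"
      using C0 A0 by (intro nn_integral_cong) (simp add: ennreal_mult)
    also have "\<dots> = ennreal C * IA" unfolding IA_def
      by (rule nn_integral_cmult) (use Am in measurable)
    finally show ?thesis .
  qed
  have IA: "IA = ennreal a"
  proof -
    have "IA = 2 * (\<integral>\<^sup>+u. ennreal (A u) * indicator {0..} u \<partial>lborel)"
      unfolding IA_def by (rule even_nn[OF Am]) (simp add: A_def)
    also have "(\<integral>\<^sup>+u. ennreal (A u) * indicator {0..} u \<partial>lborel) = (\<integral>\<^sup>+u. ennreal (u * exp (- u\<^sup>2 / a)) * indicator {0..} u \<partial>lborel)"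
      by (intro nn_integral_cong) (auto simp: A_def indicator_def)
    also have "\<dots> = ennreal (a/2)" using gauss_half[OF a0] .
    finally show ?thesis using a0 by (simp add: ennreal_numeral[symmetric] ennreal_mult[symmetric] del: ennreal_numeral)
  qed
  have Geven: "G (-x) = G x" for x by (simp add: G_def)
  have IB: "IB = ennreal (4 / \<Delta>) * J"
  proof -
    have "IB = ennreal \<bar>2 * \<Delta>\<bar> * (\<integral>\<^sup>+\<eta>. ennreal (B (0 + 2 * \<Delta> * \<eta>)) \<partial>lborel)"
      unfolding IB_def using D by (intro nn_integral_real_affine) (use Bm in measurable)
    also have "(\<integral>\<^sup>+\<eta>. ennreal (B (0 + 2 * \<Delta> * \<eta>)) \<partial>lborel) = (\<integral>\<^sup>+\<eta>. ennreal (1 / \<Delta>\<^sup>2) * ennreal (G \<eta>) \<partial>lborel)"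
    proof (rule nn_integral_cong)
      fix \<eta> :: real
      have q1: "(2 * \<Delta> * \<eta>)\<^sup>2 / (4 * \<Delta>\<^sup>2) = \<eta>\<^sup>2" using D by (simp add: power_mult_distrib)
      have q2: "(2 * \<Delta> * \<eta>)\<^sup>2 / b = \<Delta>\<^sup>2 / (\<sigma>\<^sup>2 * (1 + \<rho>)) * \<eta>\<^sup>2" unfolding b_def by (simp add: power_mult_distrib)
      have "B (0 + 2 * \<Delta> * \<eta>) = 1 / \<Delta>\<^sup>2 * G \<eta>"
        unfolding B_def G_def using q1 q2 by simp
      then show "ennreal (B (0 + 2 * \<Delta> * \<eta>)) = ennreal (1 / \<Delta>\<^sup>2) * ennreal (G \<eta>)"
        using G0[of \<eta>] by (subst ennreal_mult[symmetric]) auto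
    qed
    also have "\<dots> = ennreal (1 / \<Delta>\<^sup>2) * (\<integral>\<^sup>+\<eta>. ennreal (G \<eta>) \<partial>lborel)"
      by (rule nn_integral_cmult) (use Gm in measurable)
    also have "(\<integral>\<^sup>+\<eta>. ennreal (G \<eta>) \<partial>lborel) = 2 * J"
      unfolding J_def by (rule even_nn[OF Gm Geven])
    finally have "IB = ennreal (2 * \<Delta>) * ennreal (1 / \<Delta>\<^sup>2) * ennreal 2 * J"
      using D by (simp add: mult.assoc)
    also have "ennreal (2 * \<Delta>) * ennreal (1 / \<Delta>\<^sup>2) * ennreal 2 = ennreal (4 / \<Delta>)"
    proof -
      have e1: "2 * \<Delta> * (1 / \<Delta>\<^sup>2) * 2 = 4 / \<Delta>" using D by (simp add: power2_eq_square field_simps)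
      have "ennreal (2 * \<Delta> * (1 / \<Delta>\<^sup>2) * 2) = ennreal (2 * \<Delta> * (1 / \<Delta>\<^sup>2)) * ennreal 2"
        by (rule ennreal_mult) (use D in auto)
      also have "ennreal (2 * \<Delta> * (1 / \<Delta>\<^sup>2)) = ennreal (2 * \<Delta>) * ennreal (1 / \<Delta>\<^sup>2)"
        by (rule ennreal_mult) (use D in auto)
      finally show ?thesis using e1 by simp
    qed
    finally show ?thesis .
  qed
  have Kval: "1/2 * C * a * (4 / \<Delta>) = K"
  proof -
    have sq: "sqrt ((1 - \<rho>) / (1 + \<rho>)) * sqrt (1 - \<rho>\<^sup>2) = 1 - \<rho>"
    proof -
      have "(1 - \<rho>) / (1 + \<rho>) * (1 - \<rho>\<^sup>2) = (1 - \<rho>)\<^sup>2"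
        using r1 by (simp add: field_simps power2_eq_square)
      then show ?thesis using r2 by (simp add: real_sqrt_mult[symmetric])
    qed
    have T0: "sqrt (1 - \<rho>\<^sup>2) > 0" using rr by simp
    show ?thesis unfolding C_def a_def K_def using aux2[OF T0 s D, of "sqrt ((1 - \<rho>) / (1 + \<rho>))" "1 - \<rho>"] sq
      by simp
  qed
  have K0: "K \<ge> 0" unfolding K_def using D r1 r2 by (intro mult_nonneg_nonneg divide_nonneg_nonneg) auto
  have tot: "(\<integral>\<^sup>+p. ennreal (h p) \<partial>lborel) = ennreal K * J"
  proof -
    have "(\<integral>\<^sup>+p. ennreal (h p) \<partial>lborel) = ennreal (1/2) * (ennreal C * ennreal a * (ennreal (4 / \<Delta>) * J))"
      using hE inner outer IA IB by simp
    also have "\<dots> = ennreal (1/2 * C * a * (4 / \<Delta>)) * J"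
    proof -
      have m1: "ennreal (1/2 * C * a * (4 / \<Delta>)) = ennreal (1/2 * C * a) * ennreal (4 / \<Delta>)"
        by (rule ennreal_mult) (use C0 a0 D in auto)
      have m2: "ennreal (1/2 * C * a) = ennreal (1/2 * C) * ennreal a"
        by (rule ennreal_mult) (use C0 a0 D in auto)
      have m3: "ennreal (1/2 * C) = ennreal (1/2) * ennreal C"
        by (rule ennreal_mult) (use C0 a0 D in auto)
      show ?thesis unfolding m1 m2 m3 by (simp only: mult.assoc)
    qed
    finally show ?thesis using Kval by simp
  qed
  have Jfin: "J < \<infinity>"
  proof -
    have "J \<le> (\<integral>\<^sup>+\<eta>. ennreal (1 / (1 + \<eta>\<^sup>2)) * indicator {0..} \<eta> \<partial>lborel)"
      unfolding J_def
    proof (intro nn_integral_mono mult_right_mono ennreal_leI)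
      fix \<eta> :: real
      have p: "1 + \<eta>\<^sup>2 \<le> (1 + \<eta>\<^sup>2) powr (3/2)"
        using powr_mono[of 1 "3/2" "1 + \<eta>\<^sup>2"] by simp
      have P: "1 / (1 + \<eta>\<^sup>2) powr (3/2) \<le> 1 / (1 + \<eta>\<^sup>2)"
      proof (rule divide_left_mono[OF p])
        have "0 < 1 + \<eta>\<^sup>2" by (simp add: add_pos_nonneg)
        then show "0 < (1 + \<eta>\<^sup>2) powr (3 / 2) * (1 + \<eta>\<^sup>2)" by simp
      qed simp
      have E: "exp (- (\<Delta>\<^sup>2 / (\<sigma>\<^sup>2 * (1 + \<rho>))) * \<eta>\<^sup>2) \<le> 1"
      proof -
        have "0 \<le> \<Delta>\<^sup>2 / (\<sigma>\<^sup>2 * (1 + \<rho>)) * \<eta>\<^sup>2" using r1 by simp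
        then show ?thesis by simp
      qed
      show "G \<eta> \<le> 1 / (1 + \<eta>\<^sup>2)" unfolding G_def
        using mult_left_le[OF E, of "1 / (1 + \<eta>\<^sup>2) powr (3/2)"] P by simp
    qed auto
    also have "\<dots> = ennreal (pi/2)" by (rule arctan_half)
    finally show ?thesis by (simp add: le_less_trans)
  qed
  have int: "integrable lborel h"
  proof (rule integrableI_nonneg)
    show "h \<in> borel_measurable lborel" using hm by simp
    show "AE x in lborel. 0 \<le> h x" using h0 by simp
    show "(\<integral>\<^sup>+x. ennreal (h x) \<partial>lborel) < \<infinity>" using tot Jfin by (simp add: ennreal_mult_less_top)
  qed
  have lhs: "(\<integral>p. h p \<partial>lborel) = K * enn2real J"
    using integral_eq_nn_integral[of h lborel] hm h0 tot K0 by (simp add: enn2real_mult)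
  have rhs: "(\<integral>\<eta>\<in>{0..}. G \<eta> \<partial>lborel) = enn2real J"
  proof -
    have "(\<integral>\<eta>\<in>{0..}. G \<eta> \<partial>lborel) = (\<integral>\<eta>. indicator {0..} \<eta> *\<^sub>R G \<eta> \<partial>lborel)"
      by (simp add: set_lebesgue_integral_def)
    also have "\<dots> = enn2real (\<integral>\<^sup>+\<eta>. ennreal (indicator {0..} \<eta> *\<^sub>R G \<eta>) \<partial>lborel)"
      by (rule integral_eq_nn_integral) (use Gm G0 in \<open>auto\<close>)
    also have "(\<integral>\<^sup>+\<eta>. ennreal (indicator {0..} \<eta> *\<^sub>R G \<eta>) \<partial>lborel) = J"
      unfolding J_def by (intro nn_integral_cong) (auto simp: indicator_def)
    finally show ?thesis .
  qed
  show ?thesis using int lhs rhs unfolding h_def K_def G_def by simp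
qed

end
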